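(* Let $D\subset\mathbb{R}^d$ be measurable, $k$ a measurable positive definite kernel with the integrals below finite, and $r:D\to[0,\infty)$. Let $\bar{\mathbf{x}}_1,\dots,\bar{\mathbf{x}}_n\in D$ be distinct with replicate counts $a_1,\dots,a_n\ge1$, $N=\sum_i a_i$; let $\mathbf{K}_{(N,n)}$ be the $n\times n$ matrix with entries $k(\bar{\mathbf{x}}_i,\bar{\mathbf{x}}_j)+\delta_{ij}r(\bar{\mathbf{x}}_i)/a_i$ (assumed invertible), $\mathbf{k}_n(\mathbf{x})=(k(\mathbf{x},\bar{\mathbf{x}}_i))_{i=1}^n$, $\mathbf{W}_n$ the matrix with entries $\int_D k(\bar{\mathbf{x}}_i,\mathbf{x})k(\bar{\mathbf{x}}_j,\mathbf{x})\,d\mathbf{x}$, $E=\int_D k(\mathbf{x},\mathbf{x})\,d\mathbf{x}$, and $I_N=\int_D\big(k(\mathbf{x},\mathbf{x})-\mathbf{k}_n(\mathbf{x})^\top\mathbf{K}_{(N,n)}^{-1}\mathbf{k}_n(\mathbf{x})\big)d\mathbf{x}$. For $k\in\{1,\dots,n\}$ with $r(\bar{\mathbf{x}}_k)>0$, let $I_{N+1}(\bar{\mathbf{x}}_k)$ denote the same integral computed for the design in which $a_k$ is replaced by $a_k+1$ (one additional replicate at $\bar{\mathbf{x}}_k$), and let $$\mathbf{B}_k=\frac{(\mathbf{K}_{(N,n)}^{-1})_{\cdot,k}(\mathbf{K}_{(N,n)}^{-1})_{k,\cdot}}{a_k(a_k+1)/r(\bar{\mathbf{x}}_k)-(\mathbf{K}_{(N,n)}^{-1})_{k,k}}$$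 (denominator assumed nonzero). Then $$I_{N+1}(\bar{\mathbf{x}}_k)=I_N-\mathrm{tr}(\mathbf{B}_k\mathbf{W}_n).$$
   Context: Setting: Gaussian process regression with zero-mean GP prior with kernel $k$ and independent Gaussian noise of variance $r(\mathbf{x})$, with $a_i$ replicates at unique site $\bar{\mathbf{x}}_i$; $I_N$ is the integrated mean-squared prediction error (integral over $D$ of the de-noised posterior variance). $(\cdot)_{\cdot,k}$, $(\cdot)_{k,\cdot}$ denote the $k$-th column and row, $\delta_{ij}$ the Kronecker delta. *)

theory Defs
  imports "HOL-Analysis.Analysis"
begin

definition pd_kernel :: "('a \<Rightarrow> 'a \<Rightarrow> real) \<Rightarrow> bool" where
  "pd_kernel k \<longleftrightarrow> (\<forall>x y. k x y = k y x) \<and>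
     (\<forall>(m::nat) (x::nat \<Rightarrow> 'a) (c::nat \<Rightarrow> real).
        (\<Sum>i<m. \<Sum>j<m. c i * c j * k (x i) (x j)) \<ge> 0)"

definition Kmat :: "('a \<Rightarrow> 'a \<Rightarrow> real) \<Rightarrow> ('a \<Rightarrow> real) \<Rightarrow> ('n::finite \<Rightarrow> 'a)
    \<Rightarrow> ('n \<Rightarrow> nat) \<Rightarrow> real^'n^'n" where
  "Kmat k r xb a = (\<chi> i j. k (xb i) (xb j) + (if i = j then r (xb i) / real (a i) else 0))"

definition kvec :: "('a \<Rightarrow> 'a \<Rightarrow> real) \<Rightarrow> ('n::finite \<Rightarrow> 'a) \<Rightarrow> 'a \<Rightarrow> real^'n" where
  "kvec k xb x = (\<chi> i. k x (xb i))"

definition Wmat :: "(real^'d) set \<Rightarrow> (real^'d \<Rightarrow> real^'d \<Rightarrow> real)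
    \<Rightarrow> ('n::finite \<Rightarrow> real^'d) \<Rightarrow> real^'n^'n" where
  "Wmat D k xb = (\<chi> i j. (LINT x:D|lborel. k (xb i) x * k (xb j) x))"

definition IMSPE :: "(real^'d) set \<Rightarrow> (real^'d \<Rightarrow> real^'d \<Rightarrow> real) \<Rightarrow> (real^'d \<Rightarrow> real)
    \<Rightarrow> ('n::finite \<Rightarrow> real^'d) \<Rightarrow> ('n \<Rightarrow> nat) \<Rightarrow> real" where
  "IMSPE D k r xb a = (LINT x:D|lborel.
      k x x - kvec k xb x \<bullet> (matrix_inv (Kmat k r xb a) *v kvec k xb x))"

definition Bmat :: "(real^'d \<Rightarrow> real^'d \<Rightarrow> real) \<Rightarrow> (real^'d \<Rightarrow> real)
    \<Rightarrow> ('n::finite \<Rightarrow> real^'d) \<Rightarrow> ('n \<Rightarrow> nat) \<Rightarrow> 'n \<Rightarrow> real^'n^'n" where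
  "Bmat k r xb a l = (let Ki = matrix_inv (Kmat k r xb a) in
     (\<chi> i j. (Ki $ i $ l * Ki $ l $ j) /
        (real (a l) * (real (a l) + 1) / r (xb l) - Ki $ l $ l)))"

end

theory Submission
  imports Defs
begin

lemma set_int_sum:
  fixes f :: "'i \<Rightarrow> 'a \<Rightarrow> real"
  assumes "finite S" "\<And>i. i \<in> S \<Longrightarrow> set_integrable M A (f i)"
  shows "set_integrable M A (\<lambda>x. \<Sum>i\<in>S. f i x) \<and>
         (LINT x:A|M. (\<Sum>i\<in>S. f i x)) = (\<Sum>i\<in>S. LINT x:A|M. f i x)"
  using assms
proof (induction S rule: finite_induct)
  case empty
  then show ?case by (simp add: set_integrable_def set_lebesgue_integral_def)
next
  case (insert s S)
  then show ?case by (simp add: set_integral_add)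
qed

lemma mm_diff_r: "((A::real^'n^'m) - B) ** C = A ** C - B ** C"
  by (simp add: matrix_matrix_mult_def vec_eq_iff sum_subtractf algebra_simps)
lemma mm_add_r: "((A::real^'n^'m) + B) ** C = A ** C + B ** C"
  by (simp add: matrix_matrix_mult_def vec_eq_iff sum.distrib algebra_simps)
lemma mm_diff_l: "(A::real^'n^'m) ** (B - C) = A ** B - A ** C"
  by (simp add: matrix_matrix_mult_def vec_eq_iff sum_subtractf algebra_simps)

lemma inv_props:
  assumes "invertible (A::real^'n^'n)"
  shows "A ** matrix_inv A = mat 1" "matrix_inv A ** A = mat 1"
  using someI_ex[OF assms[unfolded invertible_def]] unfolding matrix_inv_def by auto

lemma inv_unique:
  assumes "(A::real^'n^'n) ** M = mat 1" "M ** A = mat 1"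
  shows "matrix_inv A = M"
proof -
  have inv: "invertible A" using assms unfolding invertible_def by blast
  have "matrix_inv A = matrix_inv A ** (A ** M)" by (simp add: assms)
  also have "\<dots> = M" by (simp add: matrix_mul_assoc inv_props[OF inv])
  finally show ?thesis .
qed

definition Emat :: "'n::finite \<Rightarrow> real^'n^'n" where
  "Emat l = (\<chi> i j. if i = l \<and> j = l then 1 else 0)"

lemma EX: "(Emat l ** X) $ i $ j = (if i = l then X $ l $ j else 0)"
  unfolding Emat_def matrix_matrix_mult_def by (cases "i = l") (auto simp: if_distrib if_distribR cong: if_cong)
lemma XE: "(X ** Emat l) $ i $ j = (if j = l then X $ i $ l else 0)"
  unfolding Emat_def matrix_matrix_mult_def by (cases "j = l") (auto simp: if_distrib if_distribR cong: if_cong)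

lemma EXE: "Emat l ** X ** Emat l = (X $ l $ l) *\<^sub>R Emat l"
  by (simp add: vec_eq_iff XE EX) (simp add: Emat_def)

lemma XEY: "(X ** Emat l ** Y) $ i $ j = X $ i $ l * Y $ l $ j"
  unfolding matrix_matrix_mult_def[of "X ** Emat l" Y] by (simp add: XE if_distrib if_distribR cong: if_cong)

lemma SM:
  fixes K :: "real^'n^'n"
  assumes inv: "invertible K" and c: "c * d = 1 - c * matrix_inv K $ l $ l" and d: "d \<noteq> 0"
  shows "matrix_inv (K - c *\<^sub>R Emat l) = matrix_inv K + (1/d) *\<^sub>R (matrix_inv K ** Emat l ** matrix_inv K)"
proof -
  define Ki where "Ki = matrix_inv K"
  define E where "E = Emat l"
  define q where "q = Ki $ l $ l"
  have KKi: "K ** Ki = mat 1" and KiK: "Ki ** K = mat 1" using inv_props[OF inv] Ki_def by auto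
  have EKE: "E ** Ki ** E = q *\<^sub>R E" unfolding E_def q_def by (rule EXE)
  have z: "1 - c*d - c*q = 0" using c unfolding q_def Ki_def by simp
  have "1/d - c - c * q / d = (1 - c*d - c*q)/d" using d by (simp add: field_simps)
  then have coef: "1/d - c - c * q / d = 0" using z by simp
  have r1: "K ** (Ki ** E ** Ki) = E ** Ki" by (metis matrix_mul_assoc matrix_mul_lid KKi)
  have r2: "E ** (Ki ** E ** Ki) = q *\<^sub>R (E ** Ki)"
    by (metis matrix_mul_assoc EKE scalar_matrix_assoc)
  have "(K - c *\<^sub>R E) ** (Ki + (1/d) *\<^sub>R (Ki ** E ** Ki))
      = K ** Ki + (1/d) *\<^sub>R (K ** (Ki ** E ** Ki)) - c *\<^sub>R (E ** Ki) - (c/d) *\<^sub>R (E ** (Ki ** E ** Ki))"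
    by (simp add: mm_diff_r matrix_add_ldistrib matrix_scalar_ac scalar_matrix_assoc[symmetric] algebra_simps)
  also have "\<dots> = mat 1 + (1/d - c - c * q / d) *\<^sub>R (E ** Ki)"
    by (simp add: KKi r1 r2 algebra_simps)
  also have "\<dots> = mat 1" by (simp add: coef)
  finally have A: "(K - c *\<^sub>R E) ** (Ki + (1/d) *\<^sub>R (Ki ** E ** Ki)) = mat 1" .
  have l1: "Ki ** E ** Ki ** K = Ki ** E" by (simp only: matrix_mul_assoc[symmetric] KiK matrix_mul_rid)
  have EKE': "E ** (Ki ** E) = q *\<^sub>R E" using EKE by (simp only: matrix_mul_assoc[symmetric])
  have l2: "Ki ** E ** Ki ** E = q *\<^sub>R (Ki ** E)"
    by (simp only: matrix_mul_assoc[symmetric] EKE' matrix_scalar_ac scalar_matrix_assoc)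
  have "(Ki + (1/d) *\<^sub>R (Ki ** E ** Ki)) ** (K - c *\<^sub>R E)
      = Ki ** K + (1/d) *\<^sub>R (Ki ** E ** Ki ** K) - c *\<^sub>R (Ki ** E) - (c/d) *\<^sub>R (Ki ** E ** Ki ** E)"
    by (simp add: mm_diff_l mm_add_r matrix_scalar_ac scalar_matrix_assoc[symmetric] algebra_simps)
  also have "\<dots> = mat 1 + (1/d - c - c * q / d) *\<^sub>R (Ki ** E)"
    by (simp add: KiK l1 l2 algebra_simps)
  also have "\<dots> = mat 1" by (simp add: coef)
  finally have B: "(Ki + (1/d) *\<^sub>R (Ki ** E ** Ki)) ** (K - c *\<^sub>R E) = mat 1" .
  show ?thesis using inv_unique[OF A B] unfolding Ki_def E_def .
qed

lemma quad_int:
  fixes M :: "real^'n::finite^'n" and k :: "real^'d \<Rightarrow> real^'d \<Rightarrow> real"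
  assumes sym: "\<And>x y. k x y = k y x"
    and int_W: "\<And>i j. set_integrable lborel D (\<lambda>x. k (xb i) x * k (xb j) x)"
  shows "set_integrable lborel D (\<lambda>x. kvec k xb x \<bullet> (M *v kvec k xb x))"
    "(LINT x:D|lborel. kvec k xb x \<bullet> (M *v kvec k xb x)) = trace (M ** Wmat D k xb)"
proof -
  have eq: "kvec k xb x \<bullet> (M *v kvec k xb x) = (\<Sum>i\<in>UNIV. \<Sum>j\<in>UNIV. M$i$j * (k (xb i) x * k (xb j) x))" for x
    unfolding inner_vec_def kvec_def matrix_vector_mult_def
    by (simp add: sum_distrib_left sym mult_ac)
  have ij: "set_integrable lborel D (\<lambda>x. M$i$j * (k (xb i) x * k (xb j) x))" for i j
    using int_W by simp
  have rows: "set_integrable lborel D (\<lambda>x. \<Sum>j\<in>UNIV. M$i$j * (k (xb i) x * k (xb j) x)) \<and>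
     (LINT x:D|lborel. (\<Sum>j\<in>UNIV. M$i$j * (k (xb i) x * k (xb j) x))) = (\<Sum>j\<in>UNIV. LINT x:D|lborel. M$i$j * (k (xb i) x * k (xb j) x))" for i
    by (rule set_int_sum) (auto intro: ij)
  have all: "set_integrable lborel D (\<lambda>x. \<Sum>i\<in>UNIV. \<Sum>j\<in>UNIV. M$i$j * (k (xb i) x * k (xb j) x)) \<and>
     (LINT x:D|lborel. (\<Sum>i\<in>UNIV. \<Sum>j\<in>UNIV. M$i$j * (k (xb i) x * k (xb j) x))) = (\<Sum>i\<in>UNIV. LINT x:D|lborel. \<Sum>j\<in>UNIV. M$i$j * (k (xb i) x * k (xb j) x))"
    by (rule set_int_sum) (use rows in auto)
  show "set_integrable lborel D (\<lambda>x. kvec k xb x \<bullet> (M *v kvec k xb x))"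
    unfolding eq using all by simp
  have "(LINT x:D|lborel. kvec k xb x \<bullet> (M *v kvec k xb x)) = (\<Sum>i\<in>UNIV. \<Sum>j\<in>UNIV. M$i$j * (LINT x:D|lborel. k (xb i) x * k (xb j) x))"
    unfolding eq using all rows by simp
  also have "\<dots> = trace (M ** Wmat D k xb)"
    unfolding trace_def Wmat_def matrix_matrix_mult_def by (simp add: mult.commute)
  finally show "(LINT x:D|lborel. kvec k xb x \<bullet> (M *v kvec k xb x)) = trace (M ** Wmat D k xb)" .
qed

theorem mainTheorem3:
  fixes D :: "(real^'d) set"
    and k :: "real^'d \<Rightarrow> real^'d \<Rightarrow> real"
    and r :: "real^'d \<Rightarrow> real"
    and xb :: "'n::finite \<Rightarrow> real^'d"
    and a :: "'n \<Rightarrow> nat"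
    and l :: 'n
  assumes D_meas: "D \<in> sets lborel"
    and k_meas: "(\<lambda>(x, y). k x y) \<in> borel_measurable borel"
    and k_pd: "pd_kernel k"
    and int_diag: "set_integrable lborel D (\<lambda>x. k x x)"
    and int_W: "\<And>i j. set_integrable lborel D (\<lambda>x. k (xb i) x * k (xb j) x)"
    and r_nonneg: "\<And>x. x \<in> D \<Longrightarrow> r x \<ge> 0"
    and xb_in: "\<And>i. xb i \<in> D"
    and xb_inj: "inj xb"
    and a_pos: "\<And>i. a i \<ge> 1"
    and K_inv: "invertible (Kmat k r xb a)"
    and r_pos: "r (xb l) > 0"
    and denom: "real (a l) * (real (a l) + 1) / r (xb l)
                  - matrix_inv (Kmat k r xb a) $ l $ l \<noteq> 0"
  shows "IMSPE D k r xb (a(l := a l + 1))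
           = IMSPE D k r xb a - trace (Bmat k r xb a l ** Wmat D k xb)"
proof -
  have sym: "\<And>x y. k x y = k y x" using k_pd unfolding pd_kernel_def by blast
  define K where "K = Kmat k r xb a"
  define Ki where "Ki = matrix_inv K"
  define c where "c = r (xb l) / (real (a l) * (real (a l) + 1))"
  define d where "d = real (a l) * (real (a l) + 1) / r (xb l) - Ki $ l $ l"
  have al: "real (a l) \<ge> 1" using a_pos[of l] by simp
  have dnz: "d \<noteq> 0" using denom unfolding d_def Ki_def K_def .
  have Apos: "real (a l) * (real (a l) + 1) > 0" using al by simp
  have c1: "c * (real (a l) * (real (a l) + 1) / r (xb l)) = 1"
    unfolding c_def using Apos r_pos al by simp
  have cd: "c * d = 1 - c * Ki $ l $ l"
    unfolding d_def right_diff_distrib c1 ..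
  have nz2: "real (a l) + real (a l) * real (a l) \<noteq> 0" using al
    by (metis add_pos_pos mult_pos_pos less_le_trans zero_less_one order.irrefl)
  have K1: "Kmat k r xb (a(l := a l + 1)) = K - c *\<^sub>R Emat l"
    unfolding K_def Kmat_def Emat_def c_def vec_eq_iff
    using r_pos al Apos nz2 by (auto simp: field_simps)
  have Bm: "Bmat k r xb a l = (1/d) *\<^sub>R (Ki ** Emat l ** Ki)"
    unfolding Bmat_def vec_eq_iff Let_def
    by (simp add: XEY d_def Ki_def K_def)
  have inv': "matrix_inv (Kmat k r xb (a(l := a l + 1))) = Ki + Bmat k r xb a l"
    unfolding K1 Bm Ki_def
    by (rule SM) (use K_inv cd dnz in \<open>auto simp: K_def Ki_def\<close>)
  have integrand: "k x x - kvec k xb x \<bullet> (matrix_inv (Kmat k r xb (a(l := a l + 1))) *v kvec k xb x)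
     = (k x x - kvec k xb x \<bullet> (Ki *v kvec k xb x)) - kvec k xb x \<bullet> (Bmat k r xb a l *v kvec k xb x)" for x
    unfolding inv' by (simp add: matrix_vector_mult_add_rdistrib inner_add_right)
  have i1: "set_integrable lborel D (\<lambda>x. k x x - kvec k xb x \<bullet> (Ki *v kvec k xb x))"
    by (rule set_integral_diff(1)[OF int_diag quad_int(1)[OF sym int_W]])
  have "IMSPE D k r xb (a(l := a l + 1))
      = (LINT x:D|lborel. (k x x - kvec k xb x \<bullet> (Ki *v kvec k xb x)) - kvec k xb x \<bullet> (Bmat k r xb a l *v kvec k xb x))"
    unfolding IMSPE_def integrand ..
  also have "\<dots> = (LINT x:D|lborel. k x x - kvec k xb x \<bullet> (Ki *v kvec k xb x)) - (LINT x:D|lborel. kvec k xb x \<bullet> (Bmat k r xb a l *v kvec k xb x))"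
    by (rule set_integral_diff(2)[OF i1 quad_int(1)[OF sym int_W]])
  also have "\<dots> = IMSPE D k r xb a - trace (Bmat k r xb a l ** Wmat D k xb)"
    unfolding IMSPE_def Ki_def K_def quad_int(2)[OF sym int_W] ..
  finally show ?thesis .
qed

end
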